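(* There is an absolute constant $C>0$ such that the following holds. Let $\mathcal{T}=\sum_{l=1}^r\sigma^*_lU^*_l\otimes U^*_l\otimes U^*_l+\mathcal{E}$ with the noise $\mathcal{E}$ satisfying $\max_{ijk}|\mathcal{E}_{ijk}|\le\|\mathcal{E}\|_F/n^{1.5}$, and let $\nu_i,Z,p_{ijk},\widehat p_{ijk},\mathcal{W}_{ijk},\delta_{ijk}$ be as in the context. Let $U\in\mathbb{R}^{n\times r}$ be fixed (independent of $\delta$) with unit-norm columns and $|U_{il}|\le2\nu_i$ for all $i,l$, and fix $q\in[r]$ and $\epsilon\in(0,1]$. If $m\ge\frac{C}{\epsilon^2}nZ\log^2(n)$, then with probability at least $1-n^{-10}$, $$\Big\|\sum_{i=1}^n\sum_{j,k}\big(\delta_{ijk}\mathcal{W}_{ijk}-1\big)\mathcal{E}_{ijk}U_{jq}U_{kq}\,e_i\Big\|\le\epsilon\|\mathcal{E}\|_F .$$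
   Context: $U^*\in\mathbb{R}^{n\times r}$ has orthonormal columns, $\sigma^*_l>0$. $\nu_i=\frac{\|\mathcal{T}_{i,:,:}\|_F}{\|\mathcal{T}\|_F}+\frac1{\sqrt n}$ with $\|\mathcal{T}_{i,:,:}\|_F^2=\sum_{j,k}\mathcal{T}_{ijk}^2$; $Z=(\sum_i\nu_i^{3/2})^2$; $p_{ijk}=0.5\frac{\nu_i^{3/2}\nu_j^{3/2}+\nu_j^{3/2}\nu_k^{3/2}+\nu_k^{3/2}\nu_i^{3/2}}{3nZ}+0.5\frac{\mathcal{T}_{ijk}^2}{\|\mathcal{T}\|_F^2}$; $\widehat p_{ijk}=\min\{mp_{ijk},1\}$; $\mathcal{W}_{ijk}=1/\widehat p_{ijk}$; $\delta_{ijk}$ independent Bernoulli$(\widehat p_{ijk})$; $e_i$ the standard basis vectors; $\|\cdot\|_F$ the Frobenius norm. *)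

theory Defs
  imports "HOL-Probability.Probability"
begin

text \<open>Tensors in R^(n x n x n) are functions nat => nat => nat => real, indices 0..n-1.
  Matrices in R^(n x r) are functions nat => nat => real (row index, column index).\<close>

definition frob3 :: "nat \<Rightarrow> (nat \<Rightarrow> nat \<Rightarrow> nat \<Rightarrow> real) \<Rightarrow> real" where
  "frob3 n T = sqrt (\<Sum>i<n. \<Sum>j<n. \<Sum>k<n. (T i j k)\<^sup>2)"

definition slice_norm :: "nat \<Rightarrow> (nat \<Rightarrow> nat \<Rightarrow> nat \<Rightarrow> real) \<Rightarrow> nat \<Rightarrow> real" where
  "slice_norm n T i = sqrt (\<Sum>j<n. \<Sum>k<n. (T i j k)\<^sup>2)"

definition signal3 :: "nat \<Rightarrow> (nat \<Rightarrow> real) \<Rightarrow> (nat \<Rightarrow> nat \<Rightarrow> real) \<Rightarrow> nat \<Rightarrow> nat \<Rightarrow> nat \<Rightarrow> real" where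
  "signal3 r \<sigma> U i j k = (\<Sum>l<r. \<sigma> l * U i l * U j l * U k l)"

definition nu :: "nat \<Rightarrow> (nat \<Rightarrow> nat \<Rightarrow> nat \<Rightarrow> real) \<Rightarrow> nat \<Rightarrow> real" where
  "nu n T i = slice_norm n T i / frob3 n T + 1 / sqrt (real n)"

definition Zc :: "nat \<Rightarrow> (nat \<Rightarrow> nat \<Rightarrow> nat \<Rightarrow> real) \<Rightarrow> real" where
  "Zc n T = (\<Sum>i<n. nu n T i powr (3/2))\<^sup>2"

definition samp_p :: "nat \<Rightarrow> (nat \<Rightarrow> nat \<Rightarrow> nat \<Rightarrow> real) \<Rightarrow> nat \<Rightarrow> nat \<Rightarrow> nat \<Rightarrow> real" where
  "samp_p n T i j k =
     0.5 * (nu n T i powr (3/2) * nu n T j powr (3/2) + nu n T j powr (3/2) * nu n T k powr (3/2)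
            + nu n T k powr (3/2) * nu n T i powr (3/2)) / (3 * real n * Zc n T)
     + 0.5 * (T i j k)\<^sup>2 / (frob3 n T)\<^sup>2"

definition phat :: "real \<Rightarrow> nat \<Rightarrow> (nat \<Rightarrow> nat \<Rightarrow> nat \<Rightarrow> real) \<Rightarrow> nat \<Rightarrow> nat \<Rightarrow> nat \<Rightarrow> real" where
  "phat m n T i j k = min (m * samp_p n T i j k) 1"

definition Wt :: "real \<Rightarrow> nat \<Rightarrow> (nat \<Rightarrow> nat \<Rightarrow> nat \<Rightarrow> real) \<Rightarrow> nat \<Rightarrow> nat \<Rightarrow> nat \<Rightarrow> real" where
  "Wt m n T i j k = 1 / phat m n T i j k"

definition delta_dist :: "real \<Rightarrow> nat \<Rightarrow> (nat \<Rightarrow> nat \<Rightarrow> nat \<Rightarrow> real) \<Rightarrow> (nat \<times> nat \<times> nat \<Rightarrow> bool) pmf" where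
  "delta_dist m n T = Pi_pmf ({..<n} \<times> {..<n} \<times> {..<n}) False
      (\<lambda>(i, j, k). bernoulli_pmf (phat m n T i j k))"

end

theory Submission
  imports Defs
begin



lemma exp_quad:
  fixes x :: real assumes "\<bar>x\<bar> \<le> 1" shows "exp x \<le> 1 + x + x\<^sup>2"
proof (cases "x \<ge> 0")
  case True thus ?thesis using exp_bound assms by auto
next
  case False
  define y where "y = -x"
  have y: "0 \<le> y" "y \<le> 1" using False assms by (auto simp: y_def)
  have "exp x = 1 / exp y" by (simp add: y_def exp_minus field_simps)
  also have "\<dots> \<le> 1 / (1 + y)" using exp_ge_add_one_self[of y] y
    by (intro divide_left_mono) auto
  also have "\<dots> \<le> 1 - y + y\<^sup>2"
  proof -
    have "(1 + y) * (1 - y + y\<^sup>2) = 1 + y^3" by (simp add: algebra_simps power2_eq_square power3_eq_cube)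
    moreover have "y^3 \<ge> 0" using y by simp
    ultimately show ?thesis using y by (simp add: field_simps)
  qed
  finally show ?thesis by (simp add: y_def)
qed

lemma bern_mgf:
  fixes p l a :: real
  assumes p: "0 < p" "p \<le> 1" and c: "p < 1 \<Longrightarrow> \<bar>l * a\<bar> / p \<le> 1"
  shows "measure_pmf.expectation (bernoulli_pmf p) (\<lambda>b. exp (l * ((of_bool b * (1/p) - 1) * a)))
           \<le> exp (l\<^sup>2 * a\<^sup>2 * (1/p - 1))"
proof (cases "p = 1")
  case True thus ?thesis by simp
next
  case False
  hence p1: "p < 1" using p by simp
  have cc: "\<bar>l * a\<bar> / p \<le> 1" using c p1 .
  define x1 where "x1 = l * ((1/p - 1) * a)"
  define x2 where "x2 = - (l * a)"
  have "\<bar>l*a\<bar> \<le> \<bar>l*a\<bar> / p" using p by (simp add: field_simps mult_left_le_one_le)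
  hence b2: "\<bar>x2\<bar> \<le> 1" using cc by (simp add: x2_def)
  have nn: "1/p - 1 \<ge> 0" using p by simp
  have "\<bar>x1\<bar> = \<bar>l * a\<bar> * (1/p - 1)" using nn by (simp add: x1_def abs_mult mult_ac)
  also have "\<dots> \<le> \<bar>l*a\<bar> / p" using p by (simp add: field_simps)
  finally have b1: "\<bar>x1\<bar> \<le> 1" using cc by simp
  have "measure_pmf.expectation (bernoulli_pmf p) (\<lambda>b. exp (l * ((of_bool b * (1/p) - 1) * a)))
        = exp x1 * p + exp x2 * (1 - p)" using p by (simp add: x1_def x2_def)
  also have "\<dots> \<le> (1 + x1 + x1\<^sup>2) * p + (1 + x2 + x2\<^sup>2) * (1 - p)"
    using exp_quad[OF b1] exp_quad[OF b2] p by (intro add_mono mult_right_mono) auto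
  also have "\<dots> = 1 + l\<^sup>2 * a\<^sup>2 * (1/p - 1)"
    using p by (simp add: x1_def x2_def field_simps power2_eq_square)
  also have "\<dots> \<le> exp (l\<^sup>2 * a\<^sup>2 * (1/p - 1))" by (rule exp_ge_add_one_self)
  finally show ?thesis .
qed


lemma chernoff_Pi:
  fixes A S :: "'a set" and ph a :: "'a \<Rightarrow> real" and l c V :: real
  assumes fin: "finite A" and SA: "S \<subseteq> A" and ph: "\<And>x. x \<in> A \<Longrightarrow> 0 < ph x \<and> ph x \<le> 1"
    and cond: "\<And>x. x \<in> S \<Longrightarrow> ph x < 1 \<Longrightarrow> \<bar>l * a x\<bar> / ph x \<le> 1"
    and V: "(\<Sum>x\<in>S. l\<^sup>2 * (a x)\<^sup>2 * (1/ph x - 1)) \<le> V"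
  shows "measure_pmf.prob (Pi_pmf A False (\<lambda>x. bernoulli_pmf (ph x)))
           {\<delta>. c \<le> l * (\<Sum>x\<in>S. (of_bool (\<delta> x) * (1/ph x) - 1) * a x)} \<le> exp (V - c)"
proof -
  define P where "P = Pi_pmf A False (\<lambda>x. bernoulli_pmf (ph x))"
  define g where "g x b = exp (l * ((of_bool b * (1/ph x) - 1) * a x))" for x b
  define f where "f x b = (if x \<in> S then g x b else 1)" for x b
  have fx: "f x = (if x \<in> S then g x else (\<lambda>_. 1))" for x by (auto simp: f_def fun_eq_iff)
  have finS: "finite S" using fin SA finite_subset by blast
  have eq: "exp (l * (\<Sum>x\<in>S. (of_bool (\<delta> x) * (1/ph x) - 1) * a x)) = (\<Prod>x\<in>A. f x (\<delta> x))" for \<delta>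
  proof -
    have "exp (l * (\<Sum>x\<in>S. (of_bool (\<delta> x) * (1/ph x) - 1) * a x))
          = exp (\<Sum>x\<in>S. l * ((of_bool (\<delta> x) * (1/ph x) - 1) * a x))" by (simp add: sum_distrib_left)
    also have "\<dots> = (\<Prod>x\<in>S. g x (\<delta> x))" using finS by (simp add: exp_sum g_def)
    also have "\<dots> = (\<Prod>x\<in>A \<inter> S. g x (\<delta> x))" using SA by (simp add: Int_absorb1)
    also have "\<dots> = (\<Prod>x\<in>A. f x (\<delta> x))" using fin by (simp add: prod.inter_restrict f_def)
    finally show ?thesis .
  qed
  have int: "integrable (measure_pmf P) (\<lambda>\<delta>. \<Prod>x\<in>A. f x (\<delta> x))"
    unfolding P_def by (intro integrable_prod_Pi_pmf fin integrable_measure_pmf_finite) auto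
  have "measure_pmf.prob P {\<delta>. c \<le> l * (\<Sum>x\<in>S. (of_bool (\<delta> x) * (1/ph x) - 1) * a x)}
      = measure_pmf.prob P {\<delta>\<in>space (measure_pmf P). exp c \<le> (\<Prod>x\<in>A. f x (\<delta> x))}"
    by (simp flip: eq)
  also have "\<dots> \<le> measure_pmf.expectation P (\<lambda>\<delta>. \<Prod>x\<in>A. f x (\<delta> x)) / exp c"
    by (intro integral_Markov_inequality_measure[where A = UNIV] int)
       (auto simp: f_def g_def intro!: prod_nonneg)
  also have "measure_pmf.expectation P (\<lambda>\<delta>. \<Prod>x\<in>A. f x (\<delta> x))
           = (\<Prod>x\<in>A. measure_pmf.expectation (bernoulli_pmf (ph x)) (f x))"
    unfolding P_def by (intro expectation_prod_Pi_pmf fin integrable_measure_pmf_finite)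
       (auto simp: f_def g_def)
  also have "\<dots> = (\<Prod>x\<in>A. if x \<in> S then measure_pmf.expectation (bernoulli_pmf (ph x)) (g x) else 1)"
    by (intro prod.cong) (auto simp: fx)
  also have "\<dots> = (\<Prod>x\<in>A \<inter> S. measure_pmf.expectation (bernoulli_pmf (ph x)) (g x))"
    using fin by (simp add: prod.inter_restrict)
  also have "\<dots> = (\<Prod>x\<in>S. measure_pmf.expectation (bernoulli_pmf (ph x)) (g x))"
    using SA by (simp add: Int_absorb1)
  also have "\<dots> \<le> (\<Prod>x\<in>S. exp (l\<^sup>2 * (a x)\<^sup>2 * (1/ph x - 1)))"
  proof (intro prod_mono conjI)
    fix x assume x: "x \<in> S"
    show "0 \<le> measure_pmf.expectation (bernoulli_pmf (ph x)) (g x)"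
      by (intro Bochner_Integration.integral_nonneg) (simp add: g_def)
    show "measure_pmf.expectation (bernoulli_pmf (ph x)) (g x) \<le> exp (l\<^sup>2 * (a x)\<^sup>2 * (1/ph x - 1))"
      unfolding g_def using ph[of x] x SA cond[OF x] by (intro bern_mgf) auto
  qed
  also have "\<dots> = exp (\<Sum>x\<in>S. l\<^sup>2 * (a x)\<^sup>2 * (1/ph x - 1))" using finS by (simp add: exp_sum)
  also have "\<dots> \<le> exp V" using V by simp
  finally have "measure_pmf.prob P {\<delta>. c \<le> l * (\<Sum>x\<in>S. (of_bool (\<delta> x) * (1/ph x) - 1) * a x)}
      \<le> exp V / exp c" by (simp add: divide_right_mono)
  thus ?thesis unfolding P_def by (simp add: exp_diff)
qed



lemma powr32: "(x::real) > 0 \<Longrightarrow> x powr (3/2) = x * sqrt x"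
proof -
  assume x: "x > 0"
  have "x powr (3/2) = x powr (1 + 1/2)" by simp
  also have "\<dots> = x * x powr (1/2)" using x powr_add[of x 1 "1/2"] by simp
  also have "\<dots> = x * sqrt x" using x by (simp add: powr_half_sqrt)
  finally show ?thesis .
qed

lemma term_bounds:
  fixes a e Z m N x y p :: real
  assumes N: "N > 0" and x: "x \<ge> 1 / sqrt N" and y: "y \<ge> 1 / sqrt N"
    and e: "e \<ge> 0" and Z: "Z > 0" and m: "m > 0"
    and a: "\<bar>a\<bar> \<le> e / (N * sqrt N) * (2 * x) * (2 * y)"
    and p: "0 < p" "p \<le> 1"
    and pl: "p < 1 \<Longrightarrow> p \<ge> m * (x * sqrt x) * (y * sqrt y) / (6 * N * Z)"
  shows "a\<^sup>2 * (1/p - 1) \<le> 48 * e\<^sup>2 * Z * (x + y) / (m * N\<^sup>2)"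
    and "p < 1 \<Longrightarrow> \<bar>a\<bar> / p \<le> 24 * e * Z / m"
proof -
  have sN: "sqrt N > 0" using N by simp
  have xp: "x > 0" using x sN by (smt (verit) divide_pos_pos)
  have yp: "y > 0" using y sN by (smt (verit) divide_pos_pos)
  define u where "u = sqrt x"
  define v where "v = sqrt y"
  define s where "s = sqrt N"
  have u: "u > 0" "x = u\<^sup>2" using xp by (auto simp: u_def)
  have v: "v > 0" "y = v\<^sup>2" using yp by (auto simp: v_def)
  have s: "s > 0" "N = s\<^sup>2" using N by (auto simp: s_def)
  have xs: "x * s \<ge> 1"
  proof -
    have "x * s \<ge> (1/s) * s" using x s(1) unfolding s_def by (intro mult_right_mono) auto
    thus ?thesis using s(1) by simp
  qed
  have ys: "y * s \<ge> 1"
  proof -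
    have "y * s \<ge> (1/s) * s" using y s(1) unfolding s_def by (intro mult_right_mono) auto
    thus ?thesis using s(1) by simp
  qed
  have "(x * s) * (y * s) \<ge> 1 * 1" using xs ys by (intro mult_mono) auto
  hence "(u * v * s)\<^sup>2 \<ge> 1" using u v by (simp add: power2_eq_square mult_ac)
  hence uvs: "u * v * s \<ge> 1" using u v s
    by (metis abs_of_pos mult_pos_pos one_le_power real_sqrt_abs real_sqrt_le_mono real_sqrt_one) 
  have "2 * u * v \<le> u\<^sup>2 + v\<^sup>2" using sum_squares_bound[of u v] by simp
  hence uvxy: "2 * u * v \<le> x + y" using u v by simp
  have a2: "a\<^sup>2 \<le> (e / (N * sqrt N) * (2 * x) * (2 * y))\<^sup>2"
    using a by (metis abs_ge_zero abs_le_square_iff abs_of_nonneg order_trans power2_abs)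
  show "a\<^sup>2 * (1/p - 1) \<le> 48 * e\<^sup>2 * Z * (x + y) / (m * N\<^sup>2)"
  proof (cases "p < 1")
    case False
    hence "p = 1" using p by simp
    thus ?thesis using e Z m N xp yp by simp
  next
    case True
    have q: "1/p \<le> 6 * N * Z / (m * (x * sqrt x) * (y * sqrt y))"
      proof -
        have pos: "0 < m * (x * sqrt x) * (y * sqrt y) / (6 * N * Z)" using m xp yp N Z by simp
        have "1/p \<le> 1 / (m * (x * sqrt x) * (y * sqrt y) / (6 * N * Z))"
          using le_imp_inverse_le[OF pl[OF True] pos] by (simp add: inverse_eq_divide)
        thus ?thesis by simp
      qed
    have "a\<^sup>2 * (1/p - 1) \<le> a\<^sup>2 * (1/p)" using p by (intro mult_left_mono) auto
    also have "\<dots> \<le> (e / (N * sqrt N) * (2 * x) * (2 * y))\<^sup>2 * (6 * N * Z / (m * (x * sqrt x) * (y * sqrt y)))"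
      using a2 q p by (intro mult_mono) auto
    also have "\<dots> = 96 * e\<^sup>2 * Z * (u * v) / (m * N\<^sup>2)"
    proof -
      have eqs: "sqrt x = u" "sqrt y = v" "sqrt N = s" by (simp_all add: u_def v_def s_def)
      show ?thesis unfolding eqs u(2) v(2) s(2) using u(1) v(1) s(1) Z m
        by (simp add: field_simps power2_eq_square)
    qed
    also have "\<dots> \<le> 48 * e\<^sup>2 * Z * (x + y) / (m * N\<^sup>2)"
    proof -
      have "48 * e\<^sup>2 * Z * (2 * u * v) \<le> 48 * e\<^sup>2 * Z * (x + y)"
        using uvxy Z by (intro mult_left_mono) auto
      thus ?thesis using m N by (intro divide_right_mono) (auto simp: algebra_simps)
    qed
    finally show ?thesis .
  qed
  show "\<bar>a\<bar> / p \<le> 24 * e * Z / m" if True: "p < 1"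
  proof -
    have q: "1/p \<le> 6 * N * Z / (m * (x * sqrt x) * (y * sqrt y))"
      proof -
        have pos: "0 < m * (x * sqrt x) * (y * sqrt y) / (6 * N * Z)" using m xp yp N Z by simp
        have "1/p \<le> 1 / (m * (x * sqrt x) * (y * sqrt y) / (6 * N * Z))"
          using le_imp_inverse_le[OF pl[OF True] pos] by (simp add: inverse_eq_divide)
        thus ?thesis by simp
      qed
    have "\<bar>a\<bar> / p = \<bar>a\<bar> * (1/p)" by simp
    also have "\<dots> \<le> (e / (N * sqrt N) * (2 * x) * (2 * y)) * (6 * N * Z / (m * (x * sqrt x) * (y * sqrt y)))"
      using a q p by (intro mult_mono) auto
    also have "\<dots> = 24 * e * Z / m / (u * v * s)"
    proof -
      have eqs: "sqrt x = u" "sqrt y = v" "sqrt N = s" by (simp_all add: u_def v_def s_def)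
      show ?thesis unfolding eqs u(2) v(2) s(2) using u(1) v(1) s(1) Z m
        by (simp add: field_simps power2_eq_square)
    qed
    also have "\<dots> \<le> 24 * e * Z / m" using uvs e Z m
      by (simp add: divide_le_eq_1 field_simps mult_left_mono) 
    finally show ?thesis .
  qed
qed



lemma slice_sq: "(slice_norm n T i)\<^sup>2 = (\<Sum>j<n. \<Sum>k<n. (T i j k)\<^sup>2)"
  unfolding slice_norm_def by (simp add: sum_nonneg)

lemma frob_sq: "(frob3 n T)\<^sup>2 = (\<Sum>i<n. (slice_norm n T i)\<^sup>2)"
  unfolding frob3_def slice_sq by (simp add: sum_nonneg)

lemma slice_le_frob: assumes "i < n" shows "slice_norm n T i \<le> frob3 n T"
proof -
  have "(slice_norm n T i)\<^sup>2 \<le> (frob3 n T)\<^sup>2" unfolding frob_sq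
    using assms by (intro member_le_sum) auto
  thus ?thesis by (rule power2_le_imp_le) (unfold frob3_def, intro real_sqrt_ge_zero sum_nonneg, auto)
qed

lemma nu_lower: "1 / sqrt (real n) \<le> nu n T i"
proof -
  have "0 \<le> slice_norm n T i / frob3 n T"
    by (intro divide_nonneg_nonneg) (auto simp: slice_norm_def frob3_def intro!: real_sqrt_ge_zero sum_nonneg)
  thus ?thesis unfolding nu_def by simp
qed

lemma nu_upper: assumes "i < n" "frob3 n T > 0" shows "nu n T i \<le> 2"
proof -
  have "slice_norm n T i / frob3 n T \<le> 1" using slice_le_frob[OF assms(1)] assms(2) by simp
  moreover have "1 / sqrt (real n) \<le> 1" using assms(1) by simp
  ultimately show ?thesis unfolding nu_def by simp
qed

lemma nu_sum: assumes "n \<ge> 1" "frob3 n T > 0" shows "(\<Sum>i<n. nu n T i) \<le> 2 * sqrt (real n)"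
proof -
  define s where "s = sqrt (real n)"
  define F where "F = frob3 n T"
  have s: "s > 0" "s\<^sup>2 = real n" using assms(1) by (auto simp: s_def)
  have F: "F > 0" using assms(2) by (simp add: F_def)
  have key: "u \<le> s / 2 * u\<^sup>2 + 1 / (2 * s)" for u :: real
  proof -
    have "0 \<le> s / 2 * (u - 1 / s)\<^sup>2" using s by simp
    also have "\<dots> = s / 2 * u\<^sup>2 - u + 1 / (2 * s)" using s(1)
      by (simp add: power2_eq_square field_simps)
    finally show ?thesis by simp
  qed
  have sq: "(\<Sum>i<n. (slice_norm n T i / F)\<^sup>2) = 1"
    using F by (simp add: power_divide sum_divide_distrib[symmetric] frob_sq[symmetric] F_def)
  have "(\<Sum>i<n. slice_norm n T i / F) \<le> (\<Sum>i<n. s / 2 * (slice_norm n T i / F)\<^sup>2 + 1 / (2 * s))"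
    by (intro sum_mono key)
  also have "\<dots> = s / 2 * (\<Sum>i<n. (slice_norm n T i / F)\<^sup>2) + real n / (2 * s)"
    by (simp add: sum.distrib sum_distrib_left)
  also have "\<dots> = s / 2 + real n / (2 * s)" by (simp add: sq)
  also have "\<dots> = s" using s by (simp add: field_simps power2_eq_square)
  finally have A: "(\<Sum>i<n. slice_norm n T i / F) \<le> s" .
  have "(\<Sum>i<n. nu n T i) = (\<Sum>i<n. slice_norm n T i / F) + real n / s"
    by (simp add: nu_def sum.distrib F_def s_def)
  also have "real n / s = s" using s by (simp add: field_simps power2_eq_square)
  finally show ?thesis using A by (simp add: s_def)
qed


lemma ln2_ge: "ln (2::real) \<ge> 1/2"
proof -
  have "exp (1/2::real) \<le> 1 + 1/2 + (1/2)\<^sup>2" by (rule exp_bound) auto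
  also have "\<dots> \<le> 2" by (simp add: power2_eq_square)
  finally have "exp (1/2::real) \<le> 2" .
  thus ?thesis by (metis exp_le_cancel_iff exp_ln zero_less_numeral)
qed

lemma sum_slab: "(\<Sum>x\<in>{i} \<times> ({..<n} \<times> {..<n}). h x) = (\<Sum>j<n. \<Sum>k<n. h (i, j, k))"
proof -
  have eq: "{i} \<times> ({..<n} \<times> {..<n}) = Pair i ` ({..<n} \<times> {..<n})" by auto
  have "(\<Sum>x\<in>{i} \<times> ({..<n} \<times> {..<n}). h x) = (\<Sum>x\<in>Pair i ` ({..<n} \<times> {..<n}). h x)"
    by (simp only: eq)
  also have "\<dots> = (\<Sum>y\<in>{..<n} \<times> {..<n}. h (i, y))"
    by (subst sum.reindex) (auto simp: inj_on_def)
  also have "\<dots> = (\<Sum>j<n. \<Sum>k<n. h (i, j, k))" by (simp add: sum.cartesian_product)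
  finally show ?thesis .
qed

lemma main_case:
  fixes n :: nat and E T :: "nat \<Rightarrow> nat \<Rightarrow> nat \<Rightarrow> real" and U :: "nat \<Rightarrow> nat \<Rightarrow> real"
    and q r :: nat and \<epsilon> m :: real
  assumes n2: "n \<ge> 2" and epos: "frob3 n E > 0"
    and Ebd: "\<forall>i<n. \<forall>j<n. \<forall>k<n. \<bar>E i j k\<bar> \<le> frob3 n E / real n powr 1.5"
    and FT: "frob3 n T > 0"
    and Ubd: "\<forall>i<n. \<forall>l<r. \<bar>U i l\<bar> \<le> 2 * nu n T i"
    and qr: "q < r" and eps: "0 < \<epsilon>" "\<epsilon> \<le> 1"
    and mbd: "m \<ge> 18432 / \<epsilon>\<^sup>2 * real n * Zc n T * (ln (real n))\<^sup>2"
  shows "measure_pmf.prob (delta_dist m n T)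
        {\<delta>. sqrt (\<Sum>i<n. (\<Sum>j<n. \<Sum>k<n.
                 (of_bool (\<delta> (i, j, k)) * Wt m n T i j k - 1) * E i j k * U j q * U k q)\<^sup>2)
              \<le> \<epsilon> * frob3 n E}
      \<ge> 1 - real n powr (-10)"
proof -
  define N where "N = real n"
  define e where "e = frob3 n E"
  define Z where "Z = Zc n T"
  define \<nu> where "\<nu> = nu n T"
  define A where "A = {..<n} \<times> {..<n} \<times> {..<n}"
  define ph where "ph x = phat m n T (fst x) (fst (snd x)) (snd (snd x))" for x
  define a where "a x = E (fst x) (fst (snd x)) (snd (snd x)) * U (fst (snd x)) q * U (snd (snd x)) q" for x
  define X where "X i \<delta> = (\<Sum>j<n. \<Sum>k<n.
                 (of_bool (\<delta> (i, j, k)) * Wt m n T i j k - 1) * E i j k * U j q * U k q)" for i \<delta>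
  define t where "t = \<epsilon> * e / sqrt N"
  define lam where "lam = \<epsilon> * m / (384 * e * Z)"
  define Vb where "Vb = 192 * e\<^sup>2 * Z / (m * sqrt N)"
  define P where "P = delta_dist m n T"
  have N: "N \<ge> 2" "N > 0" using n2 by (auto simp: N_def)
  have sN: "sqrt N > 0" "sqrt N \<ge> 1" using N by auto
  have e: "e > 0" using epos by (simp add: e_def)
  have nu_lo: "\<nu> i \<ge> 1 / sqrt N" for i unfolding \<nu>_def N_def by (rule nu_lower)
  have nu_pos: "\<nu> i > 0" for i using nu_lo[of i] sN by (smt (verit) divide_pos_pos)
  have nu_up: "i < n \<Longrightarrow> \<nu> i \<le> 2" for i unfolding \<nu>_def using nu_upper FT by blast
  have nusum: "(\<Sum>i<n. \<nu> i) \<le> 2 * sqrt N" unfolding \<nu>_def N_def using nu_sum FT n2 by simp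
  have Z: "Z > 0"
  proof -
    have "(\<Sum>i<n. \<nu> i powr (3/2)) > 0"
    proof (rule sum_pos)
      show "{..<n} \<noteq> {}" using n2 by (auto simp: lessThan_empty_iff)
      fix i show "0 < \<nu> i powr (3/2)" using nu_pos[of i] by simp
    qed auto
    thus ?thesis unfolding Z_def Zc_def \<nu>_def by simp
  qed
  have lnN: "ln N \<ge> 1/2" using ln2_ge N by (smt (verit) ln_le_cancel_iff)
  have m: "m > 0"
  proof -
    have "0 < 18432 / \<epsilon>\<^sup>2 * N * Z * (ln N)\<^sup>2" using eps N Z lnN by simp
    thus ?thesis using mbd by (simp add: N_def Z_def)
  qed
  define W where "W x = \<nu> x * sqrt (\<nu> x)" for x
  have Wpos: "W x > 0" for x using nu_pos[of x] by (simp add: W_def)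
  have w: "nu n T x powr (3/2) = W x" for x using powr32 nu_pos[of x] by (simp add: \<nu>_def W_def)
  have samp: "samp_p n T i j k \<ge> W j * W k / (6 * N * Z)" for i j k
  proof -
    have "samp_p n T i j k = (1/2) * (W i * W j + W j * W k + W k * W i) / (3 * N * Z)
           + (1/2) * (T i j k)\<^sup>2 / (frob3 n T)\<^sup>2"
      unfolding samp_p_def w N_def Z_def by simp
    moreover have "(1/2) * (W j * W k) / (3 * N * Z) \<le> (1/2) * (W i * W j + W j * W k + W k * W i) / (3 * N * Z)"
      using Wpos[of i] Wpos[of j] Wpos[of k] N Z
      by (intro divide_right_mono mult_left_mono) (auto intro!: add_nonneg_nonneg)
    moreover have "0 \<le> (1/2) * (T i j k)\<^sup>2 / (frob3 n T)\<^sup>2" by simp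
    moreover have "W j * W k / (6 * N * Z) = (1/2) * (W j * W k) / (3 * N * Z)" by simp
    ultimately show ?thesis by linarith
  qed
  have samppos: "samp_p n T i j k > 0" for i j k
  proof -
    have "0 < W j * W k / (6 * N * Z)" using Wpos[of j] Wpos[of k] N Z by simp
    thus ?thesis using samp[where i=i and j=j and k=k] by linarith
  qed
  have ph: "0 < ph x \<and> ph x \<le> 1" for x
    using samppos m unfolding ph_def phat_def by simp
  have phl: "ph (i,j,k) < 1 \<Longrightarrow> ph (i,j,k) \<ge> m * (\<nu> j * sqrt (\<nu> j)) * (\<nu> k * sqrt (\<nu> k)) / (6 * N * Z)" for i j k
  proof -
    assume "ph (i,j,k) < 1"
    hence "ph (i,j,k) = m * samp_p n T i j k" unfolding ph_def phat_def by (auto simp: min_def split: if_splits)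
    also have "\<dots> \<ge> m * (W j * W k / (6 * N * Z))" using samp m by (intro mult_left_mono) auto
    finally show ?thesis by (simp add: W_def)
  qed
  have p15: "real n powr 1.5 = N * sqrt N"
  proof -
    have "real n powr 1.5 = real n powr (3/2)" by simp
    thus ?thesis using powr32[of "real n"] N by (simp add: N_def)
  qed
  have abd: "\<bar>a (i,j,k)\<bar> \<le> e / (N * sqrt N) * (2 * \<nu> j) * (2 * \<nu> k)" if "i < n" "j < n" "k < n" for i j k
  proof -
    have "\<bar>a (i,j,k)\<bar> = \<bar>E i j k\<bar> * \<bar>U j q\<bar> * \<bar>U k q\<bar>" by (simp add: a_def abs_mult)
    also have "\<dots> \<le> e / (N * sqrt N) * (2 * \<nu> j) * (2 * \<nu> k)"
      using Ebd that Ubd qr p15 epos N(2) sN(1) nu_pos[of j]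
      by (intro mult_mono) (auto simp: e_def \<nu>_def intro!: divide_nonneg_nonneg mult_nonneg_nonneg)
    finally show ?thesis .
  qed
  have tb1: "(a (i,j,k))\<^sup>2 * (1 / ph (i,j,k) - 1) \<le> 48 * e\<^sup>2 * Z * (\<nu> j + \<nu> k) / (m * N\<^sup>2)"
    and tb2: "ph (i,j,k) < 1 \<Longrightarrow> \<bar>a (i,j,k)\<bar> / ph (i,j,k) \<le> 24 * e * Z / m"
    if "i < n" "j < n" "k < n" for i j k
    using term_bounds[OF N(2) nu_lo nu_lo e[THEN less_imp_le] Z m abd[OF that] ph[THEN conjunct1] ph[THEN conjunct2] phl]
    by auto
  have lam: "lam > 0" using eps m e Z by (simp add: lam_def)
  have Xeq: "X i \<delta> = (\<Sum>x\<in>{i} \<times> ({..<n} \<times> {..<n}). (of_bool (\<delta> x) * (1/ph x) - 1) * a x)" for i \<delta>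
    unfolding sum_slab X_def by (simp add: ph_def a_def Wt_def mult.assoc)
  have Pdef: "P = Pi_pmf A False (\<lambda>x. bernoulli_pmf (ph x))"
    unfolding P_def delta_dist_def A_def ph_def by (intro Pi_pmf_cong) (auto simp: case_prod_unfold)
  have Vsum: "(\<Sum>x\<in>{i} \<times> ({..<n} \<times> {..<n}). l\<^sup>2 * (a x)\<^sup>2 * (1 / ph x - 1)) \<le> lam\<^sup>2 * Vb"
    if "i < n" "l\<^sup>2 = lam\<^sup>2" for i l
  proof -
    define K where "K = 48 * e\<^sup>2 * Z / (m * N\<^sup>2)"
    have K: "K \<ge> 0" using Z m N by (simp add: K_def)
    have "(\<Sum>x\<in>{i} \<times> ({..<n} \<times> {..<n}). l\<^sup>2 * (a x)\<^sup>2 * (1 / ph x - 1))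
        = (\<Sum>j<n. \<Sum>k<n. l\<^sup>2 * ((a (i,j,k))\<^sup>2 * (1 / ph (i,j,k) - 1)))"
      by (simp add: sum_slab mult.assoc)
    also have "\<dots> \<le> (\<Sum>j<n. \<Sum>k<n. lam\<^sup>2 * (K * (\<nu> j + \<nu> k)))"
    proof (intro sum_mono)
      fix j k assume "j \<in> {..<n}" "k \<in> {..<n}"
      hence hb: "(a (i,j,k))\<^sup>2 * (1 / ph (i,j,k) - 1) \<le> K * (\<nu> j + \<nu> k)"
        using tb1[of i j k] that(1) by (simp add: K_def)
      show "l\<^sup>2 * ((a (i,j,k))\<^sup>2 * (1 / ph (i,j,k) - 1)) \<le> lam\<^sup>2 * (K * (\<nu> j + \<nu> k))"
        using that(2) mult_left_mono[OF hb, of "lam\<^sup>2"] by simp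
    qed
    also have "\<dots> = lam\<^sup>2 * K * (2 * N * (\<Sum>j<n. \<nu> j))"
    proof -
      have s1: "(\<Sum>j<n. \<Sum>k<n. lam\<^sup>2 * (K * (\<nu> j + \<nu> k))) = lam\<^sup>2 * K * (\<Sum>j<n. \<Sum>k<n. (\<nu> j + \<nu> k))"
        by (simp add: sum_distrib_left mult.assoc)
      have s2: "(\<Sum>j<n. \<Sum>k<n. (\<nu> j + \<nu> k)) = (\<Sum>j<n. real n * \<nu> j + (\<Sum>k<n. \<nu> k))"
        by (simp add: sum.distrib)
      also have "\<dots> = 2 * N * (\<Sum>j<n. \<nu> j)"
        by (simp add: sum.distrib sum_distrib_left[symmetric] N_def)
      finally show ?thesis using s1 by simp
    qed
    also have "\<dots> \<le> lam\<^sup>2 * K * (2 * N * (2 * sqrt N))"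
      using nusum K N by (intro mult_left_mono) auto
    also have "\<dots> = lam\<^sup>2 * Vb"
    proof -
      have "N = (sqrt N)\<^sup>2" using N by simp
      hence "K * (2 * N * (2 * sqrt N)) = Vb" unfolding K_def Vb_def using sN m
        by (simp add: field_simps power2_eq_square)
      thus ?thesis by simp
    qed
    finally show ?thesis .
  qed
  have tail: "measure_pmf.prob P {\<delta>. lam * t \<le> l * X i \<delta>} \<le> exp (lam\<^sup>2 * Vb - lam * t)"
    if "i < n" "\<bar>l\<bar> = lam" for i l
  proof -
    have l2: "l\<^sup>2 = lam\<^sup>2" using that(2) by (metis power2_abs)
    show ?thesis unfolding Xeq Pdef
    proof (rule chernoff_Pi)
      show "finite A" by (simp add: A_def)
      show "{i} \<times> ({..<n} \<times> {..<n}) \<subseteq> A" using that(1) by (auto simp: A_def)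
      show "\<And>x. x \<in> A \<Longrightarrow> 0 < ph x \<and> ph x \<le> 1" using ph by blast
      show "(\<Sum>x\<in>{i} \<times> ({..<n} \<times> {..<n}). l\<^sup>2 * (a x)\<^sup>2 * (1 / ph x - 1)) \<le> lam\<^sup>2 * Vb"
        using Vsum[OF that(1) l2] .
      fix x assume x: "x \<in> {i} \<times> ({..<n} \<times> {..<n})" and x1: "ph x < 1"
      obtain j k where xe: "x = (i, j, k)" and jk: "j < n" "k < n" using x by auto
      have "\<bar>l * a x\<bar> / ph x = lam * (\<bar>a x\<bar> / ph x)" using that(2) by (simp add: abs_mult)
      also have "\<dots> \<le> lam * (24 * e * Z / m)" using tb2[OF that(1) jk] x1 xe lam
        by (intro mult_left_mono) auto
      also have "\<dots> = \<epsilon> / 16" using m e Z by (simp add: lam_def field_simps)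
      also have "\<dots> \<le> 1" using eps by simp
      finally show "\<bar>l * a x\<bar> / ph x \<le> 1" .
    qed
  qed
  define b where "b = exp (- (11 * ln N) - ln 2)"
  have expo: "lam\<^sup>2 * Vb - lam * t \<le> - (11 * ln N) - ln 2"
  proof -
    have eq: "lam\<^sup>2 * Vb - lam * t = - (\<epsilon>\<^sup>2 * m / (768 * Z * sqrt N))"
      unfolding lam_def Vb_def t_def using sN m e Z eps
      by (simp add: field_simps power2_eq_square)
    have "\<epsilon>\<^sup>2 * m \<ge> \<epsilon>\<^sup>2 * (18432 / \<epsilon>\<^sup>2 * N * Z * (ln N)\<^sup>2)"
      using mbd eps by (intro mult_left_mono) (auto simp: N_def Z_def)
    hence m2: "\<epsilon>\<^sup>2 * m \<ge> 18432 * N * Z * (ln N)\<^sup>2" using eps by simp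
    have "24 * (ln N)\<^sup>2 * 1 \<le> 24 * (ln N)\<^sup>2 * sqrt N" using sN by (intro mult_left_mono) auto
    hence "24 * (ln N)\<^sup>2 \<le> 24 * (ln N)\<^sup>2 * sqrt N" by simp
    also have "\<dots> = 18432 * N * Z * (ln N)\<^sup>2 / (768 * Z * sqrt N)"
    proof -
      have "N = (sqrt N)\<^sup>2" using N by simp
      thus ?thesis using sN Z by (simp add: field_simps power2_eq_square)
    qed
    also have "\<dots> \<le> \<epsilon>\<^sup>2 * m / (768 * Z * sqrt N)" using m2 Z sN by (intro divide_right_mono) auto
    finally have A: "24 * (ln N)\<^sup>2 \<le> \<epsilon>\<^sup>2 * m / (768 * Z * sqrt N)" .
    have "12 * ln N \<le> 24 * (ln N)\<^sup>2" using lnN by (simp add: power2_eq_square)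
    moreover have "ln 2 \<le> ln N" using N by simp
    ultimately show ?thesis using A eq by linarith
  qed
  have tail': "measure_pmf.prob P {\<delta>. lam * t \<le> l * X i \<delta>} \<le> b"
    if "i < n" "\<bar>l\<bar> = lam" for i l
    using tail[OF that] expo unfolding b_def by (meson exp_le_cancel_iff order_trans)
  define Bad where "Bad = (\<Union>i\<in>{..<n}. {\<delta>. lam * t \<le> lam * X i \<delta>} \<union> {\<delta>. lam * t \<le> (-lam) * X i \<delta>})"
  have sub: "UNIV - Bad \<subseteq> {\<delta>. sqrt (\<Sum>i<n. (X i \<delta>)\<^sup>2) \<le> \<epsilon> * e}"
  proof
    fix \<delta> assume d: "\<delta> \<in> UNIV - Bad"
    have nb: "lam * X i \<delta> < lam * t \<and> - lam * X i \<delta> < lam * t" if "i < n" for i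
    proof -
      have "\<delta> \<notin> {\<delta>. lam * t \<le> lam * X i \<delta>} \<union> {\<delta>. lam * t \<le> (-lam) * X i \<delta>}"
        using d that unfolding Bad_def by blast
      thus ?thesis by (auto simp: not_le)
    qed
    have sq: "(X i \<delta>)\<^sup>2 \<le> t\<^sup>2" if "i < n" for i
    proof -
      have h1: "lam * X i \<delta> < lam * t" and h2: "lam * (- X i \<delta>) < lam * t" using nb[OF that] by auto
      have "X i \<delta> < t" "- X i \<delta> < t"
        using mult_less_cancel_left_pos[OF lam] h1 h2 by blast+
      hence "\<bar>X i \<delta>\<bar> \<le> \<bar>t\<bar>" by auto
      thus ?thesis by (simp add: abs_le_square_iff)
    qed
    have "(\<Sum>i<n. (X i \<delta>)\<^sup>2) \<le> (\<Sum>i<n. t\<^sup>2)" using sq by (intro sum_mono) auto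
    also have "\<dots> = (\<epsilon> * e)\<^sup>2" unfolding t_def using sN N
      by (simp add: power_divide N_def)
    finally have "sqrt (\<Sum>i<n. (X i \<delta>)\<^sup>2) \<le> sqrt ((\<epsilon> * e)\<^sup>2)" by (rule real_sqrt_le_mono)
    also have "\<dots> = \<epsilon> * e" using eps e by simp
    finally show "\<delta> \<in> {\<delta>. sqrt (\<Sum>i<n. (X i \<delta>)\<^sup>2) \<le> \<epsilon> * e}" by simp
  qed
  have "measure_pmf.prob P Bad \<le> (\<Sum>i\<in>{..<n}. measure_pmf.prob P ({\<delta>. lam * t \<le> lam * X i \<delta>} \<union> {\<delta>. lam * t \<le> (-lam) * X i \<delta>}))"
    unfolding Bad_def by (rule measure_UNION_le) auto
  also have "\<dots> \<le> (\<Sum>i\<in>{..<n}. b + b)"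
  proof (intro sum_mono)
    fix i assume i: "i \<in> {..<n}"
    have "measure_pmf.prob P ({\<delta>. lam * t \<le> lam * X i \<delta>} \<union> {\<delta>. lam * t \<le> (-lam) * X i \<delta>})
      \<le> measure_pmf.prob P {\<delta>. lam * t \<le> lam * X i \<delta>} + measure_pmf.prob P {\<delta>. lam * t \<le> (-lam) * X i \<delta>}"
      by (rule measure_Un_le) auto
    also have "\<dots> \<le> b + b" using i lam by (intro add_mono tail') auto
    finally show "measure_pmf.prob P ({\<delta>. lam * t \<le> lam * X i \<delta>} \<union> {\<delta>. lam * t \<le> (-lam) * X i \<delta>}) \<le> b + b" .
  qed
  also have "\<dots> = N powr (-10)"
  proof -
    have "(\<Sum>i\<in>{..<n}. b + b) = exp (ln 2) * exp (ln N) * b" using N by (simp add: N_def)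
    also have "\<dots> = exp (ln 2 + ln N + (- (11 * ln N) - ln 2))" unfolding b_def by (simp only: exp_add)
    also have "\<dots> = exp (- 10 * ln N)" by (rule arg_cong[where f=exp]) simp
    also have "\<dots> = N powr (-10)" using N by (simp add: powr_def)
    finally show ?thesis .
  qed
  finally have bad: "measure_pmf.prob P Bad \<le> N powr (-10)" .
  have c1: "measure_pmf.prob P (UNIV - Bad) = 1 - measure_pmf.prob P Bad"
    using measure_pmf.prob_compl[of Bad P] by simp
  have c2: "measure_pmf.prob P (UNIV - Bad) \<le> measure_pmf.prob P {\<delta>. sqrt (\<Sum>i<n. (X i \<delta>)\<^sup>2) \<le> \<epsilon> * e}"
    using sub by (intro measure_pmf.finite_measure_mono) auto
  have "1 - N powr (-10) \<le> measure_pmf.prob P {\<delta>. sqrt (\<Sum>i<n. (X i \<delta>)\<^sup>2) \<le> \<epsilon> * e}"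
    using c1 c2 bad by linarith
  thus ?thesis unfolding P_def X_def e_def N_def by simp
qed
lemma all_cases:
  fixes n :: nat and E T :: "nat \<Rightarrow> nat \<Rightarrow> nat \<Rightarrow> real" and U :: "nat \<Rightarrow> nat \<Rightarrow> real"
    and q r :: nat and \<epsilon> m :: real
  assumes Ebd: "\<forall>i<n. \<forall>j<n. \<forall>k<n. \<bar>E i j k\<bar> \<le> frob3 n E / real n powr 1.5"
    and FT: "frob3 n T > 0"
    and Ubd: "\<forall>i<n. \<forall>l<r. \<bar>U i l\<bar> \<le> 2 * nu n T i"
    and qr: "q < r" and eps: "0 < \<epsilon>" "\<epsilon> \<le> 1"
    and mbd: "m \<ge> 18432 / \<epsilon>\<^sup>2 * real n * Zc n T * (ln (real n))\<^sup>2"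
  shows "measure_pmf.prob (delta_dist m n T)
        {\<delta>. sqrt (\<Sum>i<n. (\<Sum>j<n. \<Sum>k<n.
                 (of_bool (\<delta> (i, j, k)) * Wt m n T i j k - 1) * E i j k * U j q * U k q)\<^sup>2)
              \<le> \<epsilon> * frob3 n E}
      \<ge> 1 - real n powr (-10)"
proof (cases "n \<ge> 2 \<and> frob3 n E > 0")
  case True thus ?thesis using main_case[OF _ _ Ebd FT Ubd qr eps mbd] by blast
next
  case False
  have fE: "frob3 n E \<ge> 0" unfolding frob3_def by (intro real_sqrt_ge_zero sum_nonneg) auto
  show ?thesis
  proof (cases "n \<le> 1")
    case True
    show ?thesis
    proof (cases "n = 0")
      case True thus ?thesis using fE eps by simp
    next
      case False
      with True have "n = 1" by simp
      thus ?thesis by simp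
    qed
  next
    case n: False
    hence e0: "frob3 n E = 0" using False fE by simp
    have E0: "E i j k = 0" if "i < n" "j < n" "k < n" for i j k
      using Ebd that e0 by fastforce
    have "{\<delta>. sqrt (\<Sum>i<n. (\<Sum>j<n. \<Sum>k<n.
                 (of_bool (\<delta> (i, j, k)) * Wt m n T i j k - 1) * E i j k * U j q * U k q)\<^sup>2)
              \<le> \<epsilon> * frob3 n E} = UNIV"
      using E0 e0 by auto
    moreover have "0 \<le> real n powr (-10)" by simp
    ultimately show ?thesis by simp
  qed
qed

theorem mainTheorem10:
  shows "\<exists>C::real. C > 0 \<and>
    (\<forall>(n::nat) (r::nat) (\<sigma>::nat \<Rightarrow> real) (Us::nat \<Rightarrow> nat \<Rightarrow> real)
       (E::nat \<Rightarrow> nat \<Rightarrow> nat \<Rightarrow> real) (U::nat \<Rightarrow> nat \<Rightarrow> real) (q::nat) (\<epsilon>::real) (m::real).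
      let T = (\<lambda>i j k. signal3 r \<sigma> Us i j k + E i j k) in
      (\<forall>l<r. \<forall>l'<r. (\<Sum>i<n. Us i l * Us i l') = (if l = l' then 1 else 0)) \<longrightarrow>
      (\<forall>l<r. \<sigma> l > 0) \<longrightarrow>
      (\<forall>i<n. \<forall>j<n. \<forall>k<n. \<bar>E i j k\<bar> \<le> frob3 n E / real n powr 1.5) \<longrightarrow>
      frob3 n T > 0 \<longrightarrow>
      (\<forall>l<r. (\<Sum>i<n. (U i l)\<^sup>2) = 1) \<longrightarrow>
      (\<forall>i<n. \<forall>l<r. \<bar>U i l\<bar> \<le> 2 * nu n T i) \<longrightarrow>
      q < r \<longrightarrow> 0 < \<epsilon> \<longrightarrow> \<epsilon> \<le> 1 \<longrightarrow>
      m \<ge> C / \<epsilon>\<^sup>2 * real n * Zc n T * (ln (real n))\<^sup>2 \<longrightarrow>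
      measure_pmf.prob (delta_dist m n T)
        {\<delta>. sqrt (\<Sum>i<n. (\<Sum>j<n. \<Sum>k<n.
                 (of_bool (\<delta> (i, j, k)) * Wt m n T i j k - 1) * E i j k * U j q * U k q)\<^sup>2)
              \<le> \<epsilon> * frob3 n E}
      \<ge> 1 - real n powr (-10))"
proof (rule exI[of _ 18432], intro conjI allI)
  show "(0::real) < 18432" by simp
next
  fix n r :: nat and \<sigma> :: "nat \<Rightarrow> real" and Us :: "nat \<Rightarrow> nat \<Rightarrow> real"
    and E :: "nat \<Rightarrow> nat \<Rightarrow> nat \<Rightarrow> real" and U :: "nat \<Rightarrow> nat \<Rightarrow> real" and q :: nat and \<epsilon> m :: real
  show "let T = (\<lambda>i j k. signal3 r \<sigma> Us i j k + E i j k) in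
      (\<forall>l<r. \<forall>l'<r. (\<Sum>i<n. Us i l * Us i l') = (if l = l' then 1 else 0)) \<longrightarrow>
      (\<forall>l<r. \<sigma> l > 0) \<longrightarrow>
      (\<forall>i<n. \<forall>j<n. \<forall>k<n. \<bar>E i j k\<bar> \<le> frob3 n E / real n powr 1.5) \<longrightarrow>
      frob3 n T > 0 \<longrightarrow>
      (\<forall>l<r. (\<Sum>i<n. (U i l)\<^sup>2) = 1) \<longrightarrow>
      (\<forall>i<n. \<forall>l<r. \<bar>U i l\<bar> \<le> 2 * nu n T i) \<longrightarrow>
      q < r \<longrightarrow> 0 < \<epsilon> \<longrightarrow> \<epsilon> \<le> 1 \<longrightarrow>
      m \<ge> 18432 / \<epsilon>\<^sup>2 * real n * Zc n T * (ln (real n))\<^sup>2 \<longrightarrow>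
      measure_pmf.prob (delta_dist m n T)
        {\<delta>. sqrt (\<Sum>i<n. (\<Sum>j<n. \<Sum>k<n.
                 (of_bool (\<delta> (i, j, k)) * Wt m n T i j k - 1) * E i j k * U j q * U k q)\<^sup>2)
              \<le> \<epsilon> * frob3 n E}
      \<ge> 1 - real n powr (-10)"
    unfolding Let_def using all_cases by blast
qed

end
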